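(* Let $M\ge 2$ be even, $T\ge 1$, $\mathcal{X}=\{\pm1,\pm3,\ldots,\pm(M-1)\}$ and $\mathcal{C}=\mathcal{X}^T\subset\mathbb{R}^T$. Let $\mathbf{y}\in\mathbb{R}^T$, $\mathbf{y}\neq\mathbf 0$. Let $\mathbf{x}^{\mathrm{opt}}$ be any maximizer of $(\hat{\mathbf{x}}'\mathbf{y})^2/\|\hat{\mathbf{x}}\|^2$ over $\hat{\mathbf{x}}\in\mathcal{C}$, let $h^{\mathrm{opt}}=(\mathbf{x}^{\mathrm{opt}})'\mathbf{y}/\|\mathbf{x}^{\mathrm{opt}}\|^2$ and $\lambda^{\mathrm{opt}}=1/h^{\mathrm{opt}}$. Then $|\lambda^{\mathrm{opt}}y_t|\le M+T-2$ for all $t=1,\ldots,T$.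
   Context: $(\cdot)'$ denotes transpose and $\|\cdot\|$ the Euclidean norm. This is noncoherent GLRT detection of $M$-ary PAM codewords of length $T$ over a real-valued block fading channel $\mathbf{y}=h\mathbf{x}+\mathbf{n}$; since $\mathbf{y}\ne\mathbf 0$ the maximum is positive so $h^{\mathrm{opt}}\neq0$. *)

theory Defs
  imports "HOL-Analysis.Analysis"
begin

definition pam :: "nat \<Rightarrow> real set" where
  "pam M = {of_int k | k::int. odd k \<and> \<bar>k\<bar> \<le> int M - 1}"

(* Codebook C = X^T : vectors indexed by {0..<T}, represented as nat => real
   functions that vanish outside {0..<T} (so each codeword is a unique object) *)
definition codebook :: "nat \<Rightarrow> nat \<Rightarrow> (nat \<Rightarrow> real) set" where
  "codebook M T = {x. (\<forall>t<T. x t \<in> pam M) \<and> (\<forall>t\<ge>T. x t = 0)}"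

definition inner_T :: "nat \<Rightarrow> (nat \<Rightarrow> real) \<Rightarrow> (nat \<Rightarrow> real) \<Rightarrow> real" where
  "inner_T T x y = (\<Sum>t<T. x t * y t)"

definition normsq_T :: "nat \<Rightarrow> (nat \<Rightarrow> real) \<Rightarrow> real" where
  "normsq_T T x = (\<Sum>t<T. (x t)^2)"

definition glrt_metric :: "nat \<Rightarrow> (nat \<Rightarrow> real) \<Rightarrow> (nat \<Rightarrow> real) \<Rightarrow> real" where
  "glrt_metric T y x = (inner_T T x y)^2 / normsq_T T x"

end

theory Submission
  imports Defs
begin

lemma pam_int: "v \<in> pam M \<Longrightarrow> \<exists>k::int. v = of_int k \<and> odd k \<and> \<bar>k\<bar> \<le> int M - 1"
  unfolding pam_def by blast

lemma pam_abs: assumes "v \<in> pam M" shows "1 \<le> \<bar>v\<bar>" "\<bar>v\<bar> \<le> real M - 1"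
proof -
  obtain k::int where k: "v = of_int k" "odd k" "\<bar>k\<bar> \<le> int M - 1" using pam_int[OF assms] by blast
  have "k \<noteq> 0" using k(2) by auto
  hence "1 \<le> \<bar>k\<bar>" by linarith
  thus "1 \<le> \<bar>v\<bar>" using k(1) by (metis of_int_1_le_iff of_int_abs)
  have "real_of_int \<bar>k\<bar> \<le> real_of_int (int M - 1)" using k(3) by (simp only: of_int_le_iff)
  thus "\<bar>v\<bar> \<le> real M - 1" using k(1) by simp
qed

lemma pam_up: assumes "v \<in> pam M" "even M" "v \<noteq> real M - 1"
  shows "v + 2 \<in> pam M" "v \<le> real M - 3"
proof -
  obtain k::int where k: "v = of_int k" "odd k" "\<bar>k\<bar> \<le> int M - 1" using pam_int[OF assms(1)] by blast
  have "k \<noteq> int M - 1" using assms(3) k(1) by auto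
  moreover have "even (int M)" using assms(2) by simp
  ultimately have "k \<le> int M - 3" using k by presburger
  hence "real_of_int k \<le> real_of_int (int M - 3)" by (simp only: of_int_le_iff)
  thus "v \<le> real M - 3" using k(1) by simp
  have "odd (k+2)" "\<bar>k+2\<bar> \<le> int M - 1" using k \<open>k \<le> int M - 3\<close> by auto
  hence "of_int (k+2) \<in> pam M" unfolding pam_def by blast
  thus "v + 2 \<in> pam M" using k(1) by simp
qed

lemma pam_neg: "v \<in> pam M \<Longrightarrow> -v \<in> pam M"
proof -
  assume "v \<in> pam M"
  then obtain k::int where k: "v = of_int k" "odd k" "\<bar>k\<bar> \<le> int M - 1" using pam_int by blast
  hence "odd (-k)" "\<bar>-k\<bar> \<le> int M - 1" by auto
  hence "of_int (-k) \<in> pam M" unfolding pam_def by blast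
  thus "-v \<in> pam M" using k by simp
qed

lemma pam_down: assumes "v \<in> pam M" "even M" "v \<noteq> -(real M - 1)"
  shows "v - 2 \<in> pam M" "v \<ge> -(real M - 3)"
proof -
  have "-v \<in> pam M" "-v \<noteq> real M - 1" using pam_neg assms by auto
  from pam_up[OF this(1) assms(2) this(2)] have "-v + 2 \<in> pam M" "-v \<le> real M - 3" by auto
  thus "v - 2 \<in> pam M" "v \<ge> -(real M - 3)" using pam_neg[of "-v+2"] by auto
qed

lemma normsq_pos: assumes "x \<in> codebook M T" "T \<ge> 1" shows "normsq_T T x > 0"
  unfolding normsq_T_def
proof (rule sum_pos)
  show "finite {..<T}" by simp
  show "{..<T} \<noteq> {}" using assms(2) by (metis lessThan_iff less_le_trans zero_less_one empty_iff)
  fix i assume "i \<in> {..<T}"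
  hence "x i \<in> pam M" using assms(1) unfolding codebook_def by auto
  hence "1 \<le> \<bar>x i\<bar>" by (rule pam_abs)
  thus "0 < (x i)^2" by (simp add: zero_less_power2) 
qed

lemma key:
  fixes a n c y x z :: real
  assumes "n > 0" "a \<noteq> 0" "(a + c*y)^2 * n \<le> a^2 * (n + 2*c*x + c^2)" "z = n / a * y"
  shows "c * (z - x) \<le> c^2 / 2"
proof -
  have y: "y = a * z / n" using assms by (simp add: field_simps)
  have "(a + c*y)^2 * n = a^2 * (n + 2*c*z + c^2 * z^2 / n)"
    unfolding y using assms(1) by (simp add: field_simps power2_eq_square)
  hence "a^2 * (n + 2*c*z + c^2 * z^2 / n) \<le> a^2 * (n + 2*c*x + c^2)" using assms(3) by simp
  moreover have "a^2 > 0" using assms(2) by simp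
  ultimately have "n + 2*c*z + c^2 * z^2 / n \<le> n + 2*c*x + c^2" by simp
  moreover have "c^2 * z^2 / n \<ge> 0" using assms(1) by simp
  ultimately show ?thesis by (simp add: algebra_simps)
qed

lemma move:
  assumes "T \<ge> 1" "x \<in> codebook M T"
    and opt: "\<forall>w\<in>codebook M T. glrt_metric T y w \<le> glrt_metric T y x"
    and "t < T" "v \<in> pam M" "inner_T T x y \<noteq> 0"
  shows "(v - x t) * (normsq_T T x / inner_T T x y * y t - x t) \<le> (v - x t)^2 / 2"
proof -
  define a n c where "a = inner_T T x y" and "n = normsq_T T x" and "c = v - x t"
  have w: "x(t:=v) \<in> codebook M T" using assms(2,4,5) unfolding codebook_def by auto
  have a': "inner_T T (x(t:=v)) y = a + c * y t"
  proof -
    have "inner_T T (x(t:=v)) y = (\<Sum>s<T. (x(t:=v)) s * y s)" by (simp add: inner_T_def)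
    also have "\<dots> = (\<Sum>s<T. x s * y s + (if s = t then (v - x t) * y t else 0))"
      by (rule sum.cong) (auto simp: algebra_simps)
    also have "\<dots> = a + c * y t" using assms(4) by (simp add: sum.distrib a_def c_def inner_T_def)
    finally show ?thesis .
  qed
  have n': "normsq_T T (x(t:=v)) = n + 2*c*x t + c^2"
  proof -
    have "normsq_T T (x(t:=v)) = (\<Sum>s<T. ((x(t:=v)) s)^2)" by (simp add: normsq_T_def)
    also have "\<dots> = (\<Sum>s<T. (x s)^2 + (if s = t then v^2 - (x t)^2 else 0))"
      by (rule sum.cong) auto
    also have "\<dots> = n + (v^2 - (x t)^2)" using assms(4) by (simp add: sum.distrib n_def normsq_T_def)
    finally show ?thesis by (simp add: c_def power2_eq_square algebra_simps)
  qed
  have np: "n > 0" using normsq_pos[OF assms(2,1)] n_def by simp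
  have np': "n + 2*c*x t + c^2 > 0" using normsq_pos[OF w assms(1)] n' by simp
  have "(a + c * y t)^2 / (n + 2*c*x t + c^2) \<le> a^2 / n"
    using opt w a' n' unfolding glrt_metric_def a_def n_def by metis
  hence "(a + c * y t)^2 * n \<le> a^2 * (n + 2*c*x t + c^2)"
    using np np' by (simp add: divide_simps)
  from key[OF np _ this refl] assms(6) show ?thesis unfolding a_def n_def c_def by simp
qed

theorem theorem1:
  fixes M T :: nat and y xopt :: "nat \<Rightarrow> real"
  assumes "M \<ge> 2" and "even M" and "T \<ge> 1"
    and "\<exists>t<T. y t \<noteq> 0"
    and "xopt \<in> codebook M T"
    and "\<forall>x\<in>codebook M T. glrt_metric T y x \<le> glrt_metric T y xopt"
  shows "\<forall>t<T. \<bar>(1 / (inner_T T xopt y / normsq_T T xopt)) * y t\<bar> \<le> real M + real T - 2"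
proof (intro allI impI)
  fix t assume t: "t < T"
  define a n where "a = inner_T T xopt y" and "n = normsq_T T xopt"
  define z where "z s = n / a * y s" for s
  have lhs: "1 / (inner_T T xopt y / normsq_T T xopt) * y t = z t"
    by (simp add: z_def a_def n_def)
  show "\<bar>(1 / (inner_T T xopt y / normsq_T T xopt)) * y t\<bar> \<le> real M + real T - 2"
  proof (cases "a = 0")
    case True thus ?thesis using assms(1,3) by (simp add: a_def)
  next
    case False
    have np: "n > 0" using normsq_pos[OF assms(5,3)] n_def by simp
    have pamx: "\<And>s. s < T \<Longrightarrow> xopt s \<in> pam M" using assms(5) unfolding codebook_def by auto
    have mv: "\<And>s v. s < T \<Longrightarrow> v \<in> pam M \<Longrightarrow> (v - xopt s) * (z s - xopt s) \<le> (v - xopt s)^2 / 2"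
      using move[OF assms(3,5,6)] False unfolding z_def a_def n_def by blast
    have inw: "xopt s * z s - (xopt s)^2 \<ge> - \<bar>xopt s\<bar>" if s: "s < T" for s
    proof (cases "xopt s > 0")
      case True
      have "xopt s \<noteq> -(real M - 1)" using True assms(1) by auto
      hence "xopt s - 2 \<in> pam M" using pam_down(1)[OF pamx[OF s] assms(2)] by blast
      from mv[OF s this] have "-2 * (z s - xopt s) \<le> 2" by (simp add: power2_eq_square)
      hence "z s - xopt s \<ge> -1" by simp
      hence "xopt s * (z s - xopt s) \<ge> xopt s * (-1)" using True by (intro mult_left_mono) auto
      thus ?thesis using True by (simp add: algebra_simps power2_eq_square)
    next
      case False
      have "xopt s \<noteq> real M - 1" using False assms(1) by auto
      hence "xopt s + 2 \<in> pam M" using pam_up(1)[OF pamx[OF s] assms(2)] by blast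
      from mv[OF s this] have "2 * (z s - xopt s) \<le> 2" by (simp add: power2_eq_square)
      hence "z s - xopt s \<le> 1" by simp
      hence "xopt s * (z s - xopt s) \<ge> xopt s * 1" using False by (intro mult_left_mono_neg) auto
      thus ?thesis using False by (simp add: algebra_simps power2_eq_square)
    qed
    have sum0: "(\<Sum>s<T. xopt s * z s - (xopt s)^2) = 0"
    proof -
      have "(\<Sum>s<T. xopt s * z s) = (\<Sum>s<T. n / a * (xopt s * y s))"
        by (rule sum.cong) (auto simp: z_def)
      also have "\<dots> = n / a * (\<Sum>s<T. xopt s * y s)" by (rule sum_distrib_left[symmetric])
      also have "\<dots> = n / a * a" by (simp only: a_def inner_T_def)
      also have "\<dots> = (\<Sum>s<T. (xopt s)^2)" using False by (simp add: n_def normsq_T_def)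
      finally show ?thesis by (simp add: sum_subtractf)
    qed
    have "(\<Sum>s<T. xopt s * z s - (xopt s)^2) = (xopt t * z t - (xopt t)^2) + (\<Sum>s\<in>{..<T}-{t}. xopt s * z s - (xopt s)^2)"
      using t by (simp add: sum.remove)
    moreover have "(\<Sum>s\<in>{..<T}-{t}. xopt s * z s - (xopt s)^2) \<ge> (\<Sum>s\<in>{..<T}-{t}. - (real M - 1))"
    proof (rule sum_mono)
      fix s assume "s \<in> {..<T}-{t}"
      hence s: "s < T" by auto
      show "- (real M - 1) \<le> xopt s * z s - (xopt s)^2"
        using inw[OF s] pam_abs(2)[OF pamx[OF s]] by linarith
    qed
    moreover have "(\<Sum>s\<in>{..<T}-{t}. - (real M - 1)) = - (real T - 1) * (real M - 1)"
      using t by (simp add: card_Diff_singleton algebra_simps)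
    ultimately have bound: "xopt t * z t - (xopt t)^2 \<le> (real T - 1) * (real M - 1)"
      using sum0 by linarith
    have M1: "real M - 1 \<ge> 1" using assms(1) by simp
    have "\<bar>z t\<bar> \<le> real M + real T - 2"
    proof (cases "\<bar>z t\<bar> \<le> real M - 1")
      case True thus ?thesis using assms(3) by simp
    next
      case nb: False
      show ?thesis
      proof (cases "z t > 0")
        case True
        have xt: "xopt t = real M - 1"
        proof (rule ccontr)
          assume "xopt t \<noteq> real M - 1"
          from pam_up[OF pamx[OF t] assms(2) this] have "xopt t + 2 \<in> pam M" "xopt t \<le> real M - 3" by auto
          from mv[OF t this(1)] have "2 * (z t - xopt t) \<le> 2" by (simp add: power2_eq_square)
          thus False using nb True \<open>xopt t \<le> real M - 3\<close> by (auto simp: abs_if split: if_splits)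
        qed
        have "(real M - 1) * (z t - (real M - 1)) \<le> (real M - 1) * (real T - 1)"
          using bound xt by (simp add: algebra_simps power2_eq_square)
        hence "z t - (real M - 1) \<le> real T - 1" using M1 by (simp add: mult_le_cancel_left)
        thus ?thesis using True by simp
      next
        case False
        have xt: "xopt t = -(real M - 1)"
        proof (rule ccontr)
          assume "xopt t \<noteq> -(real M - 1)"
          from pam_down[OF pamx[OF t] assms(2) this] have "xopt t - 2 \<in> pam M" "xopt t \<ge> -(real M - 3)" by auto
          from mv[OF t this(1)] have "-2 * (z t - xopt t) \<le> 2" by (simp add: power2_eq_square)
          thus False using nb False \<open>xopt t \<ge> -(real M - 3)\<close> by (auto simp: abs_if split: if_splits)
        qed
        have "(real M - 1) * (- z t - (real M - 1)) \<le> (real M - 1) * (real T - 1)"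
          using bound xt by (simp add: algebra_simps power2_eq_square)
        hence "- z t - (real M - 1) \<le> real T - 1" using M1 by (simp add: mult_le_cancel_left)
        thus ?thesis using False by simp
      qed
    qed
    thus ?thesis using lhs by simp
  qed
qed

end
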